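(* Let $X$ be a $K$-th order integrated process with generalized spectral density $f$, and assume (W1)–(W4) hold with some $M\ge K$. For $0\le u\le j$ and $\lambda\in(-\pi,\pi)$ define $$\mathbf D_{j,u}(\lambda;f)=\sum_{l=0}^{2^j-1}\mathbf e_u(\lambda+2l\pi)\,f(2^{-j}(\lambda+2l\pi))\,2^{-j/2}H_j(2^{-j}(\lambda+2l\pi))\,2^{-(j-u)/2}\overline{H_{j-u}(2^{-j}(\lambda+2l\pi))}.$$ Then for all $0\le u\le j$ and $k,k'\in\mathbb Z$, $$\mathrm{Cov}\big(W^X_{j,k},\mathbf W^X_{j,k'}(u)\big)=\int_{-\pi}^{\pi}e^{i\lambda(k-k')}\,\mathbf D_{j,u}(\lambda;f)\,d\lambda .$$ In particular, for every $j\ge0$ the process $(W^X_{j,k})_{k\in\mathbb Z}$ is covariance stationary with spectral density $\mathbf D_{j,0}(\cdot;f)$, and for $j\ge u>0$ the process $\big([W^X_{j,k},\mathbf W^X_{j,k}(u)^T]^T\big)_{k\in\mathbb Z}$ is covariance stationary with cross spectral density $\mathbf D_{j,u}(\cdot;f)$ between its scalar and vector components.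
   Context: Conditions on $\phi,\psi\in L^2(\mathbb R)$ (Fourier transform $\hat g(\xi)=\int g(t)e^{-i\xi t}dt$), integer $M\ge1$, $\alpha>1$: (W1) compactly supported, integrable, $\hat\phi(0)=1$, $\int\psi^2=1$; (W2) $\sup_\xi|\hat\psi(\xi)|(1+|\xi|)^\alpha<\infty$; (W3) $\int t^m\psi=0$, $m<M$; (W4) for $m<M$, $t\mapsto\sum_kk^m\phi(t-k)$ is a polynomial of degree $m$. $h_{j,l}=2^{-j/2}\int\phi(t+l)\psi(2^{-j}t)dt$, $H_j(\lambda)=\sum_lh_{j,l}e^{-i\lambda l}$. $\psi_{j,k}(t)=2^{-j/2}\psi(2^{-j}t-k)$, $\mathbf X(t)=\sum_kX_k\phi(t-k)$, $W^X_{j,k}=\int\mathbf X\psi_{j,k}$. For $0\le u\le j$, $\mathbf W^X_{j,k}(u)=[W^X_{j-u,2^uk},W^X_{j-u,2^uk+1},\dots,W^X_{j-u,2^uk+2^u-1}]^T$, and $\mathbf e_u(\xi)=2^{-u/2}[1,e^{-i2^{-u}\xi},\dots,e^{-i(2^u-1)2^{-u}\xi}]^T$. Spectral density convention: $\mathrm{Cov}(Y_{k+l},Y_l)=\int_{-\pi}^\pi e^{ik\lambda}g(\lambda)d\lambda$ (and analogously for cross spectral densities). $X$ is a $K$-th order integrated process with generalized spectral density $f$ if $\Delta^KX$ ($(\Delta X)_k=X_k-X_{k-1}$) is weakly stationary with spectral density $|1-e^{-i\lambda}|^{2K}f(\lambda)$. *)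

theory Defs
  imports "HOL-Probability.Probability" "HOL-Computational_Algebra.Polynomial"
begin

definition fourier :: "(real \<Rightarrow> real) \<Rightarrow> real \<Rightarrow> complex" where
  "fourier g \<xi> = (CLINT t|lborel. complex_of_real (g t) * exp (- \<i> * complex_of_real \<xi> * complex_of_real t))"

definition covar :: "'a measure \<Rightarrow> ('a \<Rightarrow> real) \<Rightarrow> ('a \<Rightarrow> real) \<Rightarrow> real" where
  "covar P Y Z = (\<integral>\<omega>. Y \<omega> * Z \<omega> \<partial>P) - (\<integral>\<omega>. Y \<omega> \<partial>P) * (\<integral>\<omega>. Z \<omega> \<partial>P)"

definition weakly_stationary_spectral ::
  "'a measure \<Rightarrow> (int \<Rightarrow> 'a \<Rightarrow> real) \<Rightarrow> (real \<Rightarrow> real) \<Rightarrow> bool" where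
  "weakly_stationary_spectral P Y g \<longleftrightarrow>
     (\<forall>k. Y k \<in> borel_measurable P \<and> integrable P (\<lambda>\<omega>. (Y k \<omega>)\<^sup>2)) \<and>
     (\<exists>\<mu>. \<forall>k. (\<integral>\<omega>. Y k \<omega> \<partial>P) = \<mu>) \<and>
     (\<forall>w\<in>{-pi..pi}. 0 \<le> g w) \<and> set_integrable lborel {-pi..pi} g \<and>
     (\<forall>k l. complex_of_real (covar P (Y (k + l)) (Y l)) =
        (CLBINT w=-pi..pi. exp (\<i> * of_int k * complex_of_real w) * complex_of_real (g w)))"

fun diff_iter :: "nat \<Rightarrow> (int \<Rightarrow> 'a \<Rightarrow> real) \<Rightarrow> int \<Rightarrow> 'a \<Rightarrow> real" where
  "diff_iter 0 X = X"
| "diff_iter (Suc n) X = (\<lambda>k \<omega>. diff_iter n X k \<omega> - diff_iter n X (k - 1) \<omega>)"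

(* X is a K-th order integrated process with generalized spectral density f
   (f is a non-negative function on the real line, viewed 2pi-periodically) *)
definition integrated_process_gsd ::
  "'a measure \<Rightarrow> (int \<Rightarrow> 'a \<Rightarrow> real) \<Rightarrow> nat \<Rightarrow> (real \<Rightarrow> real) \<Rightarrow> bool" where
  "integrated_process_gsd P X K f \<longleftrightarrow>
     (\<forall>k. X k \<in> borel_measurable P) \<and> (\<forall>w. 0 \<le> f w) \<and>
     weakly_stationary_spectral P (diff_iter K X)
        (\<lambda>w. (cmod (1 - exp (- \<i> * complex_of_real w))) ^ (2 * K) * f w)"

definition psi_jk :: "(real \<Rightarrow> real) \<Rightarrow> nat \<Rightarrow> int \<Rightarrow> real \<Rightarrow> real" where
  "psi_jk \<psi> j k t = 2 powr (- real j / 2) * \<psi> (2 powr (- real j) * t - real_of_int k)"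

definition cont_path :: "(int \<Rightarrow> 'a \<Rightarrow> real) \<Rightarrow> (real \<Rightarrow> real) \<Rightarrow> 'a \<Rightarrow> real \<Rightarrow> real" where
  "cont_path X \<phi> \<omega> t = (\<Sum>\<^sub>\<infinity>k::int. X k \<omega> * \<phi> (t - real_of_int k))"

definition wav_coef :: "(int \<Rightarrow> 'a \<Rightarrow> real) \<Rightarrow> (real \<Rightarrow> real) \<Rightarrow> (real \<Rightarrow> real) \<Rightarrow> nat \<Rightarrow> int \<Rightarrow> 'a \<Rightarrow> real" where
  "wav_coef X \<phi> \<psi> j k \<omega> = (\<integral>t. cont_path X \<phi> \<omega> t * psi_jk \<psi> j k t \<partial>lborel)"

definition filt_h :: "(real \<Rightarrow> real) \<Rightarrow> (real \<Rightarrow> real) \<Rightarrow> nat \<Rightarrow> int \<Rightarrow> real" where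
  "filt_h \<phi> \<psi> j l = 2 powr (- real j / 2) * (\<integral>t. \<phi> (t + real_of_int l) * \<psi> (2 powr (- real j) * t) \<partial>lborel)"

definition filt_H :: "(real \<Rightarrow> real) \<Rightarrow> (real \<Rightarrow> real) \<Rightarrow> nat \<Rightarrow> real \<Rightarrow> complex" where
  "filt_H \<phi> \<psi> j w = (\<Sum>\<^sub>\<infinity>l::int. complex_of_real (filt_h \<phi> \<psi> j l) *
      exp (- \<i> * complex_of_real w * of_int l))"

(* i-th component (0 \<le> i < 2^u) of D_{j,u}(w; f) *)
definition D_ju :: "(real \<Rightarrow> real) \<Rightarrow> (real \<Rightarrow> real) \<Rightarrow> (real \<Rightarrow> real) \<Rightarrow> nat \<Rightarrow> nat \<Rightarrow> nat \<Rightarrow> real \<Rightarrow> complex" where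
  "D_ju \<phi> \<psi> f j u i w =
     (\<Sum>l<(2::nat)^j.
        let \<zeta> = w + 2 * real l * pi; \<xi> = 2 powr (- real j) * \<zeta> in
        complex_of_real (2 powr (- real u / 2)) *
          exp (- \<i> * of_nat i * complex_of_real (2 powr (- real u) * \<zeta>)) *
        complex_of_real (f \<xi>) *
        complex_of_real (2 powr (- real j / 2)) * filt_H \<phi> \<psi> j \<xi> *
        complex_of_real (2 powr (- (real j - real u) / 2)) * cnj (filt_H \<phi> \<psi> (j - u) \<xi>))"

end

theory Submission
  imports Defs
begin


definition dlt :: "(int \<Rightarrow> real) \<Rightarrow> int \<Rightarrow> real" where
  "dlt d l = d l - d (l - 1)"

definition fsupp :: "(int \<Rightarrow> real) \<Rightarrow> int \<Rightarrow> bool" where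
  "fsupp c N \<longleftrightarrow> (\<forall>l. N < \<bar>l\<bar> \<longrightarrow> c l = 0)"

lemma sum_int_shift: "(\<Sum>l\<in>{a..b::int}. f l) = (\<Sum>l\<in>{a-1..b-1}. f (l+1))"
  by (rule sum.reindex_bij_witness[where i="\<lambda>l. l+1" and j="\<lambda>l. l-1"]) auto

lemma fsupp_mono: "fsupp c N \<Longrightarrow> N \<le> N' \<Longrightarrow> fsupp c N'"
  unfolding fsupp_def by auto

lemma fsupp_sum_enlarge:
  fixes V :: "int \<Rightarrow> 'b::real_vector"
  assumes "fsupp c N" "N \<le> N'"
  shows "(\<Sum>l\<in>{-N'..N'}. c l *\<^sub>R V l) = (\<Sum>l\<in>{-N..N}. c l *\<^sub>R V l)"
  by (rule sum.mono_neutral_right) (use assms in \<open>auto simp: fsupp_def\<close>)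

lemma fsupp_dlt: "fsupp d N \<Longrightarrow> 0 \<le> N \<Longrightarrow> fsupp (dlt d) (N+1)"
  unfolding fsupp_def dlt_def by auto

lemma fsupp_dlt_pow: "fsupp d N \<Longrightarrow> 0 \<le> N \<Longrightarrow> fsupp ((dlt^^K) d) (N + int K)"
proof (induction K)
  case 0 then show ?case by simp
next
  case (Suc K)
  then have "fsupp (dlt ((dlt^^K) d)) (N + int K + 1)" by (intro fsupp_dlt) auto
  then show ?case by (simp add: ac_simps)
qed

lemma dlt_sum:
  fixes V :: "int \<Rightarrow> 'b::real_vector"
  assumes "fsupp d N" "0 \<le> N"
  shows "(\<Sum>l\<in>{-(N+1)..N+1}. dlt d l *\<^sub>R V l) = (\<Sum>l\<in>{-N..N}. d l *\<^sub>R (V l - V (l+1)))"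
proof -
  have s1: "(\<Sum>l\<in>{-(N+1)..N+1}. d l *\<^sub>R V l) = (\<Sum>l\<in>{-N..N}. d l *\<^sub>R V l)"
    by (rule fsupp_sum_enlarge[OF assms(1)]) auto
  have "(\<Sum>l\<in>{-(N+1)..N+1}. d (l - 1) *\<^sub>R V l) = (\<Sum>l\<in>{-(N+1)-1..N+1-1}. d l *\<^sub>R V (l+1))"
    by (subst sum_int_shift) simp
  also have "\<dots> = (\<Sum>l\<in>{-N..N}. d l *\<^sub>R V (l+1))"
    by (rule sum.mono_neutral_right) (use assms in \<open>auto simp: fsupp_def\<close>)
  finally have s2: "(\<Sum>l\<in>{-(N+1)..N+1}. d (l - 1) *\<^sub>R V l) = (\<Sum>l\<in>{-N..N}. d l *\<^sub>R V (l+1))" .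
  show ?thesis
    unfolding dlt_def scaleR_diff_left sum_subtractf s1 s2 scaleR_diff_right by simp
qed

lemma dlt_pow_time:
  assumes "fsupp d N" "0 \<le> N"
  shows "(\<Sum>l\<in>{-(N+int K)..N+int K}. (dlt^^K) d l * X (n - l) \<omega>) =
         (\<Sum>l\<in>{-N..N}. d l * diff_iter K X (n - l) \<omega>)"
  using assms
proof (induction K arbitrary: d N)
  case 0 then show ?case by simp
next
  case (Suc K)
  have f1: "fsupp (dlt d) (N+1)" using Suc.prems by (rule fsupp_dlt)
  have "(\<Sum>l\<in>{-(N+int (Suc K))..N+int (Suc K)}. (dlt^^Suc K) d l * X (n - l) \<omega>)
      = (\<Sum>l\<in>{-((N+1)+int K)..(N+1)+int K}. (dlt^^K) (dlt d) l * X (n - l) \<omega>)"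
    unfolding funpow_Suc_right comp_def by (simp add: add_ac)
  also have "\<dots> = (\<Sum>l\<in>{-(N+1)..N+1}. dlt d l * diff_iter K X (n - l) \<omega>)"
    using Suc.IH[OF f1] Suc.prems by simp
  also have "\<dots> = (\<Sum>l\<in>{-N..N}. d l * (diff_iter K X (n - l) \<omega> - diff_iter K X (n - (l+1)) \<omega>))"
    using dlt_sum[OF Suc.prems, of "\<lambda>l. diff_iter K X (n - l) \<omega>"] by simp
  also have "\<dots> = (\<Sum>l\<in>{-N..N}. d l * diff_iter (Suc K) X (n - l) \<omega>)"
    by (simp add: algebra_simps)
  finally show ?case .
qed

lemma dlt_pow_freq:
  assumes "fsupp d N" "0 \<le> N"
  shows "(\<Sum>l\<in>{-(N+int K)..N+int K}. complex_of_real ((dlt^^K) d l) * exp (- \<i> * complex_of_real w * of_int l)) =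
         (1 - exp (- \<i> * complex_of_real w)) ^ K * (\<Sum>l\<in>{-N..N}. complex_of_real (d l) * exp (- \<i> * complex_of_real w * of_int l))"
  using assms
proof (induction K arbitrary: d N)
  case 0 then show ?case by simp
next
  case (Suc K)
  let ?E = "\<lambda>l::int. exp (- \<i> * complex_of_real w * of_int l)"
  have f1: "fsupp (dlt d) (N+1)" using Suc.prems by (rule fsupp_dlt)
  have "(\<Sum>l\<in>{-(N+int (Suc K))..N+int (Suc K)}. complex_of_real ((dlt^^Suc K) d l) * ?E l)
      = (\<Sum>l\<in>{-((N+1)+int K)..(N+1)+int K}. complex_of_real ((dlt^^K) (dlt d) l) * ?E l)"
    unfolding funpow_Suc_right comp_def by (simp add: add_ac)
  also have "\<dots> = (1 - exp (- \<i> * complex_of_real w)) ^ K * (\<Sum>l\<in>{-(N+1)..N+1}. complex_of_real (dlt d l) * ?E l)"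
    using Suc.IH[OF f1] Suc.prems by simp
  also have "(\<Sum>l\<in>{-(N+1)..N+1}. complex_of_real (dlt d l) * ?E l) = (\<Sum>l\<in>{-N..N}. complex_of_real (d l) * (?E l - ?E (l+1)))"
    using dlt_sum[OF Suc.prems, of ?E] by (simp add: scaleR_conv_of_real)
  also have "\<dots> = (1 - exp (- \<i> * complex_of_real w)) * (\<Sum>l\<in>{-N..N}. complex_of_real (d l) * ?E l)"
    unfolding sum_distrib_left
  proof (rule sum.cong)
    fix l :: int
    have "?E (l+1) = ?E l * exp (- \<i> * complex_of_real w)"
      by (simp add: exp_add[symmetric] algebra_simps)
    then show "complex_of_real (d l) * (?E l - ?E (l+1)) = (1 - exp (- \<i> * complex_of_real w)) * (complex_of_real (d l) * ?E l)"
      by (simp add: algebra_simps)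
  qed simp
  finally show ?case by simp
qed



lemma tele_poly: "\<exists>q::real poly. degree q \<le> m+1 \<and> (\<forall>x. poly q (x+1) - poly q x = x^m)"
proof (induction m rule: less_induct)
  case (less m)
  then have "\<forall>r. \<exists>q::real poly. r < m \<longrightarrow> degree q \<le> r+1 \<and> (\<forall>x. poly q (x+1) - poly q x = x^r)"
    by blast
  then have "\<exists>Q. \<forall>r. r < m \<longrightarrow> degree (Q r :: real poly) \<le> r+1 \<and> (\<forall>x. poly (Q r) (x+1) - poly (Q r) x = x^r)"
    by (rule choice)
  then obtain Q where Q0: "\<forall>r. r < m \<longrightarrow> degree (Q r :: real poly) \<le> r+1 \<and> (\<forall>x. poly (Q r) (x+1) - poly (Q r) x = x^r)"
    by blast
  have Q: "\<And>r. r < m \<Longrightarrow> degree (Q r) \<le> r+1 \<and> (\<forall>x. poly (Q r) (x+1) - poly (Q r) x = x^r)"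
    using Q0 by blast
  define q where "q = smult (1/(real m+1)) (monom 1 (Suc m) - (\<Sum>r<m. smult (of_nat (Suc m choose r)) (Q r)))"
  have d1: "degree (\<Sum>r<m. smult (of_nat (Suc m choose r)) (Q r)) \<le> Suc m"
  proof (rule degree_sum_le)
    fix r assume "r \<in> {..<m}"
    then have "degree (Q r) \<le> Suc m" using Q[of r] by auto
    then show "degree (smult (of_nat (Suc m choose r)) (Q r)) \<le> Suc m"
      using degree_smult_le order.trans by blast
  qed simp
  have d2: "degree (monom (1::real) (Suc m)) \<le> Suc m" by (rule degree_monom_le)
  have "degree q \<le> m+1"
    unfolding q_def using degree_diff_le[OF d2 d1] degree_smult_le order.trans by fastforce
  moreover have "poly q (x+1) - poly q x = x^m" for x
  proof -
    have b: "(x+1)^Suc m = (\<Sum>r<m. of_nat (Suc m choose r) * x^r) + of_nat (Suc m) * x^m + x^Suc m"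
    proof -
      have "(x+1)^Suc m = (\<Sum>k\<le>Suc m. of_nat (Suc m choose k) * x^k * 1^(Suc m - k))"
        by (rule binomial_ring)
      also have "\<dots> = (\<Sum>k<Suc (Suc m). of_nat (Suc m choose k) * x^k)"
        by (simp add: lessThan_Suc_atMost)
      also have "\<dots> = (\<Sum>r<m. of_nat (Suc m choose r) * x^r) + of_nat (Suc m) * x^m + x^Suc m"
        by (simp only: sum.lessThan_Suc) simp
      finally show ?thesis .
    qed
    have pq: "poly q y = (1/(real m+1)) * (y^Suc m - (\<Sum>r<m. of_nat (Suc m choose r) * poly (Q r) y))" for y
      unfolding q_def by (simp add: poly_monom poly_sum)
    have e1: "poly q (x+1) - poly q x = (1/(real m+1)) * ((x+1)^Suc m - x^Suc m
            - (\<Sum>r<m. of_nat (Suc m choose r) * (poly (Q r) (x+1) - poly (Q r) x)))"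
    proof -
      have "(\<Sum>r<m. of_nat (Suc m choose r) * (poly (Q r) (x+1) - poly (Q r) x)) =
            (\<Sum>r<m. of_nat (Suc m choose r) * poly (Q r) (x+1)) - (\<Sum>r<m. of_nat (Suc m choose r) * poly (Q r) x)"
        by (simp add: right_diff_distrib sum_subtractf)
      then show ?thesis unfolding pq by (simp add: right_diff_distrib)
    qed
    have e2: "(\<Sum>r<m. of_nat (Suc m choose r) * (poly (Q r) (x+1) - poly (Q r) x)) = (\<Sum>r<m. of_nat (Suc m choose r) * x^r)"
      using Q by (intro sum.cong) auto
    have e3: "(x+1)^Suc m - x^Suc m - (\<Sum>r<m. of_nat (Suc m choose r) * x^r) = (real m + 1) * x^m"
      unfolding b by simp
    show ?thesis unfolding e1 e2 e3 by simp
  qed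
  ultimately show ?case by blast
qed

lemma tele_nat: "(\<Sum>l\<in>{s..s + int n - 1}. f (l+1) - f l) = f (s + int n) - (f s :: real)"
proof (induction n)
  case 0 then show ?case by simp
next
  case (Suc n)
  have "{s..s + int (Suc n) - 1} = insert (s + int n) {s..s + int n - 1}" by auto
  then show ?case using Suc by (simp add: add_ac)
qed

lemma tele_int: "s \<le> t+1 \<Longrightarrow> (\<Sum>l\<in>{s..t::int}. f (l+1) - f l) = f (t+1) - (f s :: real)"
  using tele_nat[where s=s and n="nat (t - s + 1)" and f=f] by simp

lemma moments_factor:
  assumes "fsupp c N" "0 \<le> N" "\<forall>m<K. (\<Sum>l\<in>{-N..N}. c l * of_int l ^ m) = 0"
  shows "\<exists>d. fsupp d N \<and> (dlt^^K) d = c"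
  using assms
proof (induction K arbitrary: c)
  case 0 then show ?case by auto
next
  case (Suc K)
  have c0: "(\<Sum>l\<in>{-N..N}. c l) = 0" using Suc.prems(3) by auto
  define d where "d l = (\<Sum>s\<in>{-N..l}. c s)" for l
  have dfs: "fsupp d N"
    unfolding fsupp_def
  proof (intro allI impI)
    fix l assume l: "N < \<bar>l\<bar>"
    show "d l = 0"
    proof (cases "l < -N")
      case True then show ?thesis by (simp add: d_def)
    next
      case False
      then have "N < l" using l by auto
      then have "d l = (\<Sum>s\<in>{-N..N}. c s)"
        unfolding d_def by (intro sum.mono_neutral_right) (use Suc.prems(1) in \<open>auto simp: fsupp_def\<close>)
      then show ?thesis using c0 by simp
    qed
  qed
  have dd: "dlt d = c"
  proof
    fix l
    show "dlt d l = c l"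
    proof (cases "l < -N")
      case True then show ?thesis using Suc.prems(1) by (auto simp: dlt_def d_def fsupp_def)
    next
      case False
      then have "{-N..l} = insert l {-N..l-1}" by auto
      then show ?thesis by (simp add: dlt_def d_def)
    qed
  qed
  have dm: "\<forall>m<K. (\<Sum>l\<in>{-N..N}. d l * of_int l ^ m) = 0"
  proof (intro allI impI)
    fix m assume m: "m < K"
    obtain q :: "real poly" where q: "degree q \<le> m+1" "\<And>x. poly q (x+1) - poly q x = x^m"
      using tele_poly by blast
    have "(\<Sum>l\<in>{-N..N}. d l * of_int l ^ m) = (\<Sum>l\<in>{-N..N}. \<Sum>s\<in>{-N..N}. if s \<le> l then c s * of_int l ^ m else 0)"
    proof (rule sum.cong)
      fix l assume l: "l \<in> {-N..N}"
      have "d l = (\<Sum>s\<in>{-N..N}. if s \<le> l then c s else 0)"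
        unfolding d_def using l by (intro sum.mono_neutral_cong_left) auto
      then show "d l * of_int l ^ m = (\<Sum>s\<in>{-N..N}. if s \<le> l then c s * of_int l ^ m else 0)"
        by (auto simp: sum_distrib_right intro!: sum.cong)
    qed simp
    also have "\<dots> = (\<Sum>s\<in>{-N..N}. \<Sum>l\<in>{-N..N}. if s \<le> l then c s * of_int l ^ m else 0)"
      by (rule sum.swap)
    also have "\<dots> = (\<Sum>s\<in>{-N..N}. c s * (\<Sum>l\<in>{s..N}. of_int l ^ m))"
    proof (rule sum.cong)
      fix s assume s: "s \<in> {-N..N}"
      have "(\<Sum>l\<in>{-N..N}. if s \<le> l then c s * of_int l ^ m else 0) = (\<Sum>l\<in>{s..N}. c s * of_int l ^ m)"
        using s by (intro sum.mono_neutral_cong_right) auto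
      then show "(\<Sum>l\<in>{-N..N}. if s \<le> l then c s * of_int l ^ m else 0) = c s * (\<Sum>l\<in>{s..N}. of_int l ^ m)"
        by (simp add: sum_distrib_left)
    qed simp
    also have "\<dots> = (\<Sum>s\<in>{-N..N}. c s * (poly q (of_int (N+1)) - poly q (of_int s)))"
    proof (rule sum.cong)
      fix s assume s: "s \<in> {-N..N}"
      have "(\<Sum>l\<in>{s..N}. (of_int l::real) ^ m) = (\<Sum>l\<in>{s..N}. poly q (of_int (l+1)) - poly q (of_int l))"
        using q(2) by simp
      also have "\<dots> = poly q (of_int (N+1)) - poly q (of_int s)"
        using tele_int[of s N "\<lambda>l. poly q (of_int l)"] s by simp
      finally show "c s * (\<Sum>l\<in>{s..N}. of_int l ^ m) = c s * (poly q (of_int (N+1)) - poly q (of_int s))" by simp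
    qed simp
    also have "\<dots> = poly q (of_int (N+1)) * (\<Sum>s\<in>{-N..N}. c s) - (\<Sum>s\<in>{-N..N}. c s * poly q (of_int s))"
      unfolding right_diff_distrib sum_subtractf sum_distrib_left by (simp add: mult.commute)
    also have "(\<Sum>s\<in>{-N..N}. c s * poly q (of_int s)) = (\<Sum>r\<le>degree q. coeff q r * (\<Sum>s\<in>{-N..N}. c s * of_int s ^ r))"
      unfolding poly_altdef sum_distrib_left by (subst sum.swap) (intro sum.cong refl, simp add: mult_ac)
    also have "\<dots> = 0"
      using Suc.prems(3) q(1) m by (intro sum.neutral) auto
    finally show "(\<Sum>l\<in>{-N..N}. d l * of_int l ^ m) = 0" using c0 by simp
  qed
  obtain d' where "fsupp d' N" "(dlt^^K) d' = d" using Suc.IH[OF dfs Suc.prems(2) dm] by blast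
  then show ?case using dd by (intro exI[of _ d']) simp
qed



lemma abs_mult_le_sq: "\<bar>a * b\<bar> \<le> a^2 + (b::real)^2"
proof -
  have "0 \<le> (\<bar>a\<bar> - \<bar>b\<bar>)^2" by simp
  then have "2 * (\<bar>a\<bar> * \<bar>b\<bar>) \<le> a^2 + b^2" by (simp add: power2_eq_square algebra_simps)
  moreover have "0 \<le> \<bar>a\<bar> * \<bar>b\<bar>" by simp
  ultimately have "\<bar>a\<bar> * \<bar>b\<bar> \<le> a^2 + b^2" by linarith
  then show ?thesis by (simp add: abs_mult)
qed

lemma int_prod_L2:
  fixes f g :: "'a \<Rightarrow> real"
  assumes "f \<in> borel_measurable M" "g \<in> borel_measurable M"
    "integrable M (\<lambda>x. (f x)^2)" "integrable M (\<lambda>x. (g x)^2)"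
  shows "integrable M (\<lambda>x. f x * g x)"
proof (rule Bochner_Integration.integrable_bound[where f="\<lambda>x. (f x)^2 + (g x)^2"])
  show "integrable M (\<lambda>x. (f x)^2 + (g x)^2)" using assms by simp
  show "(\<lambda>x. f x * g x) \<in> borel_measurable M" using assms by measurable
  show "AE x in M. norm (f x * g x) \<le> norm ((f x)^2 + (g x)^2)"
    using abs_mult_le_sq by auto
qed

lemma covar_sum:
  assumes P: "prob_space P" and Ym: "\<And>k. Y k \<in> borel_measurable P"
    and Y2: "\<And>k. integrable P (\<lambda>\<omega>. (Y k \<omega>)^2)" and fin: "finite A" "finite B"
  shows "covar P (\<lambda>\<omega>. \<Sum>a\<in>A. \<alpha> a * Y (p a) \<omega>) (\<lambda>\<omega>. \<Sum>b\<in>B. \<beta> b * Y (q b) \<omega>) =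
         (\<Sum>a\<in>A. \<Sum>b\<in>B. \<alpha> a * \<beta> b * covar P (Y (p a)) (Y (q b)))"
proof -
  interpret prob_space P by (rule P)
  have Yi: "integrable P (Y k)" for k
    by (rule square_integrable_imp_integrable[OF Ym Y2])
  have YY: "integrable P (\<lambda>\<omega>. Y k \<omega> * Y k' \<omega>)" for k k'
    by (rule int_prod_L2[OF Ym Ym Y2 Y2])
  have e1: "(\<integral>\<omega>. (\<Sum>a\<in>A. \<alpha> a * Y (p a) \<omega>) * (\<Sum>b\<in>B. \<beta> b * Y (q b) \<omega>) \<partial>P)
      = (\<Sum>a\<in>A. \<Sum>b\<in>B. \<alpha> a * \<beta> b * (\<integral>\<omega>. Y (p a) \<omega> * Y (q b) \<omega> \<partial>P))"
  proof -
    have "(\<integral>\<omega>. (\<Sum>a\<in>A. \<alpha> a * Y (p a) \<omega>) * (\<Sum>b\<in>B. \<beta> b * Y (q b) \<omega>) \<partial>P)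
        = (\<integral>\<omega>. (\<Sum>a\<in>A. \<Sum>b\<in>B. \<alpha> a * \<beta> b * (Y (p a) \<omega> * Y (q b) \<omega>)) \<partial>P)"
      by (simp add: sum_product mult_ac)
    also have "\<dots> = (\<Sum>a\<in>A. \<Sum>b\<in>B. \<alpha> a * \<beta> b * (\<integral>\<omega>. Y (p a) \<omega> * Y (q b) \<omega> \<partial>P))"
      using YY by (simp add: integral_sum integrable_sum)
    finally show ?thesis .
  qed
  have e2: "(\<integral>\<omega>. (\<Sum>a\<in>A. \<alpha> a * Y (p a) \<omega>) \<partial>P) = (\<Sum>a\<in>A. \<alpha> a * (\<integral>\<omega>. Y (p a) \<omega> \<partial>P))"
    using Yi by (simp add: integral_sum)
  have e3: "(\<integral>\<omega>. (\<Sum>b\<in>B. \<beta> b * Y (q b) \<omega>) \<partial>P) = (\<Sum>b\<in>B. \<beta> b * (\<integral>\<omega>. Y (q b) \<omega> \<partial>P))"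
    using Yi by (simp add: integral_sum)
  show ?thesis
    unfolding covar_def unfolding e1 e2 e3 unfolding sum_product
    by (simp add: sum_subtractf[symmetric] right_diff_distrib mult_ac)
qed



lemma infsum_int_fin:
  fixes f :: "int \<Rightarrow> 'b::{comm_monoid_add, t2_space}"
  assumes "finite S" "\<And>t. t \<notin> S \<Longrightarrow> f t = 0"
  shows "infsum f UNIV = sum f S"
proof -
  have "infsum f UNIV = infsum f S"
    by (rule infsum_cong_neutral) (use assms in auto)
  then show ?thesis using assms by simp
qed

lemma powr_neg_j: "(2::real) powr (- real j) = inverse (2^j)"
  by (simp add: powr_minus powr_realpow)

locale wv =
  fixes \<phi> \<psi> :: "real \<Rightarrow> real" and a :: real
  assumes a0: "0 \<le> a"
  and supp: "\<And>t. a < \<bar>t\<bar> \<Longrightarrow> \<phi> t = 0 \<and> \<psi> t = 0"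
  and phm: "\<phi> \<in> borel_measurable borel" and psm: "\<psi> \<in> borel_measurable borel"
  and ph2: "integrable lborel (\<lambda>t. (\<phi> t)^2)" and ps2: "integrable lborel (\<lambda>t. (\<psi> t)^2)"
  and psi_int: "integrable lborel \<psi>"
begin

definition NN :: "nat \<Rightarrow> int" where "NN j = \<lceil>a + 2^j * a\<rceil>"

lemma NN_ge: "a + 2^j * a \<le> real_of_int (NN j)"
  unfolding NN_def by simp

lemma NN_nonneg: "0 \<le> NN j"
proof -
  have "0 \<le> 2^j * a" using a0 by simp
  then show ?thesis unfolding NN_def using a0 by linarith
qed

lemma NN_mono: "j' \<le> j \<Longrightarrow> NN j' \<le> NN j"
  unfolding NN_def using a0 by (intro ceiling_mono add_left_mono mult_right_mono) auto

lemma psi_scaled_supp: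
  assumes "\<psi> (2 powr (- real j) * t - b) \<noteq> 0"
  shows "\<bar>t - 2^j * b\<bar> \<le> 2^j * a"
proof -
  have "\<bar>inverse (2^j) * t - b\<bar> \<le> a" using supp[of "2 powr (- real j) * t - b"] assms
    unfolding powr_neg_j by force
  then have "\<bar>2^j * (inverse (2^j) * t - b)\<bar> \<le> 2^j * a"
    by (simp add: abs_mult)
  then show ?thesis by (simp add: algebra_simps)
qed

lemma prod_int:
  assumes "c \<noteq> 0"
  shows "integrable lborel (\<lambda>s. \<phi> (b + s) * \<psi> (b' + c * s))"
proof (rule int_prod_L2)
  have [measurable]: "\<phi> \<in> borel_measurable borel" "\<psi> \<in> borel_measurable borel" by (rule phm, rule psm)
  show "(\<lambda>s. \<phi> (b + s)) \<in> borel_measurable lborel" by measurable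
  show "(\<lambda>s. \<psi> (b' + c * s)) \<in> borel_measurable lborel" by measurable
  show "integrable lborel (\<lambda>s. (\<phi> (b + s))^2)"
    using lborel_integrable_real_affine[OF ph2, of 1 b] by simp
  show "integrable lborel (\<lambda>s. (\<psi> (b' + c * s))^2)"
    using lborel_integrable_real_affine[OF ps2, of c b'] assms by simp
qed

lemma h_supp: "fsupp (filt_h \<phi> \<psi> j) (NN j)"
  unfolding fsupp_def
proof (intro allI impI)
  fix l :: int assume l: "NN j < \<bar>l\<bar>"
  have "\<phi> (t + real_of_int l) * \<psi> (2 powr (- real j) * t) = 0" for t
  proof (rule ccontr)
    assume "\<phi> (t + real_of_int l) * \<psi> (2 powr (- real j) * t) \<noteq> 0"
    then have h1: "\<phi> (t + real_of_int l) \<noteq> 0" and h2: "\<psi> (2 powr (- real j) * t - 0) \<noteq> 0" by auto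
    have "\<bar>t + real_of_int l\<bar> \<le> a" using supp h1 by force
    moreover have "\<bar>t\<bar> \<le> 2^j * a" using psi_scaled_supp[OF h2] by simp
    ultimately have "\<bar>real_of_int l\<bar> \<le> a + 2^j * a" by linarith
    then show False using NN_ge[of j] l by linarith
  qed
  then have "(\<lambda>t. \<phi> (t + real_of_int l) * \<psi> (2 powr (- real j) * t)) = (\<lambda>t. 0)" by auto
  then show "filt_h \<phi> \<psi> j l = 0" unfolding filt_h_def by simp
qed

lemma wav_formula:
  "wav_coef X \<phi> \<psi> j k \<omega> = (\<Sum>l\<in>{-NN j..NN j}. filt_h \<phi> \<psi> j l * X (2^j * k - l) \<omega>)"
proof -
  define N where "N = NN j"
  define n where "n = (2::int)^j * k"
  have pw: "cont_path X \<phi> \<omega> s * psi_jk \<psi> j k s =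
      (\<Sum>l\<in>{-N..N}. X (n - l) \<omega> * (\<phi> (s - of_int (n - l)) * psi_jk \<psi> j k s))" for s
  proof (cases "\<psi> (2 powr (- real j) * s - real_of_int k) = 0")
    case True then show ?thesis by (simp add: psi_jk_def)
  next
    case False
    have sn: "\<bar>s - real_of_int n\<bar> \<le> 2^j * a" using psi_scaled_supp[OF False] by (simp add: n_def)
    have "cont_path X \<phi> \<omega> s = (\<Sum>t\<in>{n-N..n+N}. X t \<omega> * \<phi> (s - real_of_int t))"
      unfolding cont_path_def
    proof (rule infsum_int_fin)
      fix t assume "t \<notin> {n-N..n+N}"
      then have "N < \<bar>t - n\<bar>" by auto
      then have "a + 2^j * a < \<bar>real_of_int t - real_of_int n\<bar>" using NN_ge[of j] unfolding N_def by linarith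
      then have "a < \<bar>s - real_of_int t\<bar>" using sn by linarith
      then show "X t \<omega> * \<phi> (s - real_of_int t) = 0" using supp by simp
    qed simp
    also have "\<dots> = (\<Sum>l\<in>{-N..N}. X (n - l) \<omega> * \<phi> (s - real_of_int (n - l)))"
      by (rule sum.reindex_bij_witness[where i="\<lambda>l. n - l" and j="\<lambda>t. n - t"]) auto
    finally show ?thesis by (simp add: sum_distrib_right mult.assoc)
  qed
  have ii: "integrable lborel (\<lambda>s. \<phi> (s - real_of_int (n - l)) * psi_jk \<psi> j k s)" for l
  proof -
    have "integrable lborel (\<lambda>s. 2 powr (- real j / 2) * (\<phi> (real_of_int (l - n) + s) * \<psi> (- real_of_int k + 2 powr (- real j) * s)))"
      using prod_int[of "2 powr (- real j)" "real_of_int (l - n)" "- real_of_int k"] by simp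
    then show ?thesis unfolding psi_jk_def by (simp add: algebra_simps)
  qed
  have iv: "(\<integral>s. \<phi> (s - real_of_int (n - l)) * psi_jk \<psi> j k s \<partial>lborel) = filt_h \<phi> \<psi> j l" for l
  proof -
    have "(\<integral>s. \<phi> (s - real_of_int (n - l)) * psi_jk \<psi> j k s \<partial>lborel)
        = (\<integral>x. \<phi> ((real_of_int n + 1 * x) - real_of_int (n - l)) * psi_jk \<psi> j k (real_of_int n + 1 * x) \<partial>lborel)"
      using lborel_integral_real_affine[of 1 "\<lambda>s. \<phi> (s - real_of_int (n - l)) * psi_jk \<psi> j k s" "real_of_int n"] by simp
    also have "\<dots> = (\<integral>x. 2 powr (- real j / 2) * (\<phi> (x + real_of_int l) * \<psi> (2 powr (- real j) * x)) \<partial>lborel)"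
    proof (rule Bochner_Integration.integral_cong[OF refl])
      fix x
      have "2 powr (- real j) * (real_of_int n + x) - real_of_int k = 2 powr (- real j) * x"
        unfolding n_def powr_neg_j by (simp add: algebra_simps)
      then show "\<phi> ((real_of_int n + 1 * x) - real_of_int (n - l)) * psi_jk \<psi> j k (real_of_int n + 1 * x)
          = 2 powr (- real j / 2) * (\<phi> (x + real_of_int l) * \<psi> (2 powr (- real j) * x))"
        unfolding psi_jk_def by (simp add: algebra_simps)
    qed
    also have "\<dots> = filt_h \<phi> \<psi> j l" unfolding filt_h_def by simp
    finally show ?thesis .
  qed
  have "wav_coef X \<phi> \<psi> j k \<omega> = (\<integral>s. (\<Sum>l\<in>{-N..N}. X (n - l) \<omega> * (\<phi> (s - of_int (n - l)) * psi_jk \<psi> j k s)) \<partial>lborel)"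
    unfolding wav_coef_def pw ..
  also have "\<dots> = (\<Sum>l\<in>{-N..N}. X (n - l) \<omega> * (\<integral>s. \<phi> (s - of_int (n - l)) * psi_jk \<psi> j k s \<partial>lborel))"
    using ii by (simp add: integral_sum)
  also have "\<dots> = (\<Sum>l\<in>{-N..N}. filt_h \<phi> \<psi> j l * X (n - l) \<omega>)"
    using iv by (simp add: mult.commute)
  finally show ?thesis unfolding N_def n_def .
qed

end


context wv begin

lemma mom_int: "integrable lborel (\<lambda>x. x^r * \<psi> x)"
proof (rule Bochner_Integration.integrable_bound[where f="\<lambda>x. a^r * \<psi> x"])
  have [measurable]: "\<psi> \<in> borel_measurable borel" by (rule psm)
  show "integrable lborel (\<lambda>x. a^r * \<psi> x)" using psi_int by simp
  show "(\<lambda>x. x^r * \<psi> x) \<in> borel_measurable lborel" by measurable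
  show "AE x in lborel. norm (x^r * \<psi> x) \<le> norm (a^r * \<psi> x)"
  proof (intro AE_I2)
    fix x
    show "norm (x^r * \<psi> x) \<le> norm (a^r * \<psi> x)"
    proof (cases "a < \<bar>x\<bar>")
      case True then show ?thesis using supp by simp
    next
      case False
      then have "\<bar>x\<bar>^r \<le> a^r" by (intro power_mono) auto
      then show ?thesis using a0 by (simp add: abs_mult power_abs mult_right_mono)
    qed
  qed
qed

lemma h_moments:
  assumes W3: "\<forall>m<M. (\<integral>t. t ^ m * \<psi> t \<partial>lborel) = 0"
    and W4: "\<forall>m<M. \<exists>p :: real poly. degree p = m \<and>
               (\<forall>t. (\<Sum>\<^sub>\<infinity>k::int. real_of_int k ^ m * \<phi> (t - real_of_int k)) = poly p t)"
    and m: "m < M"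
  shows "(\<Sum>l\<in>{-NN j..NN j}. filt_h \<phi> \<psi> j l * of_int l ^ m) = 0"
proof -
  define N where "N = NN j"
  obtain p :: "real poly" where p: "degree p = m"
    "\<And>t. (\<Sum>\<^sub>\<infinity>k::int. real_of_int k ^ m * \<phi> (t - real_of_int k)) = poly p t"
    using W4 m by blast
  have pw: "(\<Sum>l\<in>{-N..N}. of_int l ^ m * (\<phi> (t + of_int l) * \<psi> (2 powr (- real j) * t)))
           = (-1)^m * poly p t * \<psi> (2 powr (- real j) * t)" for t
  proof (cases "\<psi> (2 powr (- real j) * t - 0) = 0")
    case True then show ?thesis by simp
  next
    case False
    have tb: "\<bar>t\<bar> \<le> 2^j * a" using psi_scaled_supp[OF False] by simp
    have "poly p t = (\<Sum>k\<in>{-N..N}. real_of_int k ^ m * \<phi> (t - real_of_int k))"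
      unfolding p(2)[symmetric]
    proof (rule infsum_int_fin)
      fix k assume "k \<notin> {-N..N}"
      then have "N < \<bar>k\<bar>" by auto
      then have "a + 2^j * a < \<bar>real_of_int k\<bar>" using NN_ge[of j] unfolding N_def by linarith
      then have "a < \<bar>t - real_of_int k\<bar>" using tb by linarith
      then show "real_of_int k ^ m * \<phi> (t - real_of_int k) = 0" using supp by simp
    qed simp
    also have "\<dots> = (\<Sum>l\<in>{-N..N}. real_of_int (-l) ^ m * \<phi> (t - real_of_int (-l)))"
      by (rule sum.reindex_bij_witness[where i="\<lambda>l. - l" and j="\<lambda>l. - l"]) auto
    also have "\<dots> = (-1)^m * (\<Sum>l\<in>{-N..N}. real_of_int l ^ m * \<phi> (t + real_of_int l))"
      unfolding sum_distrib_left
    proof (rule sum.cong[OF refl])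
      fix l
      have "(real_of_int (-l))^m = (-1)^m * (real_of_int l)^m"
        using power_minus[of "real_of_int l" m] by simp
      then show "real_of_int (-l) ^ m * \<phi> (t - real_of_int (-l)) = (-1)^m * (real_of_int l ^ m * \<phi> (t + real_of_int l))"
        by simp
    qed
    finally have pp: "poly p t = (-1)^m * (\<Sum>l\<in>{-N..N}. real_of_int l ^ m * \<phi> (t + real_of_int l))" .
    have m1: "(-1::real)^m * (-1)^m = 1" by (simp add: power_mult_distrib[symmetric])
    have "(-1)^m * poly p t * \<psi> (2 powr (- real j) * t) = ((-1)^m * (-1)^m) * (\<Sum>l\<in>{-N..N}. real_of_int l ^ m * \<phi> (t + real_of_int l)) * \<psi> (2 powr (- real j) * t)"
      unfolding pp by (simp only: mult.assoc)
    also have "\<dots> = (\<Sum>l\<in>{-N..N}. of_int l ^ m * (\<phi> (t + of_int l) * \<psi> (2 powr (- real j) * t)))"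
      unfolding m1 by (simp add: sum_distrib_right mult.assoc)
    finally show ?thesis by simp
  qed
  have ii: "integrable lborel (\<lambda>t. \<phi> (t + of_int l) * \<psi> (2 powr (- real j) * t))" for l
    using prod_int[of "2 powr (- real j)" "of_int l" 0] by (simp add: add.commute)
  have "(\<Sum>l\<in>{-N..N}. filt_h \<phi> \<psi> j l * of_int l ^ m)
      = 2 powr (- real j / 2) * (\<Sum>l\<in>{-N..N}. of_int l ^ m * (\<integral>t. \<phi> (t + of_int l) * \<psi> (2 powr (- real j) * t) \<partial>lborel))"
    unfolding filt_h_def by (simp add: sum_distrib_left mult_ac)
  also have "(\<Sum>l\<in>{-N..N}. of_int l ^ m * (\<integral>t. \<phi> (t + of_int l) * \<psi> (2 powr (- real j) * t) \<partial>lborel))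
      = (\<integral>t. (\<Sum>l\<in>{-N..N}. of_int l ^ m * (\<phi> (t + of_int l) * \<psi> (2 powr (- real j) * t))) \<partial>lborel)"
    using ii by (simp add: integral_sum)
  also have "\<dots> = (\<integral>t. (-1)^m * poly p t * \<psi> (2 powr (- real j) * t) \<partial>lborel)"
    unfolding pw ..
  also have "\<dots> = 0"
  proof -
    have "(\<integral>t. poly p t * \<psi> (2 powr (- real j) * t) \<partial>lborel)
        = 2^j * (\<integral>x. poly p (0 + 2^j * x) * \<psi> (2 powr (- real j) * (0 + 2^j * x)) \<partial>lborel)"
      using lborel_integral_real_affine[of "2^j" "\<lambda>t. poly p t * \<psi> (2 powr (- real j) * t)" 0] by simp
    also have "(\<integral>x. poly p (0 + 2^j * x) * \<psi> (2 powr (- real j) * (0 + 2^j * x)) \<partial>lborel)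
        = (\<integral>x. (\<Sum>r\<le>degree p. (coeff p r * 2^(j*r)) * (x^r * \<psi> x)) \<partial>lborel)"
    proof (rule Bochner_Integration.integral_cong[OF refl])
      fix x :: real
      have e1: "2 powr (- real j) * (0 + 2^j * x) = x" unfolding powr_neg_j by simp
      have e2: "poly p (0 + 2^j * x) = (\<Sum>r\<le>degree p. (coeff p r * 2^(j*r)) * x^r)"
        unfolding poly_altdef by (simp add: power_mult_distrib power_mult[symmetric] mult.commute[of j] mult_ac)
      show "poly p (0 + 2^j * x) * \<psi> (2 powr (- real j) * (0 + 2^j * x))
          = (\<Sum>r\<le>degree p. (coeff p r * 2^(j*r)) * (x^r * \<psi> x))"
        unfolding e1 e2 by (simp add: sum_distrib_right sum_distrib_left mult_ac)
    qed
    also have "\<dots> = (\<Sum>r\<le>degree p. (coeff p r * 2^(j*r)) * (\<integral>x. x^r * \<psi> x \<partial>lborel))"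
      using mom_int by (simp add: integral_sum)
    also have "\<dots> = 0"
      using W3 p(1) m by (intro sum.neutral) auto
    finally have z: "(\<integral>t. poly p t * \<psi> (2 powr (- real j) * t) \<partial>lborel) = 0" by simp
    have "(\<integral>t. (-1)^m * poly p t * \<psi> (2 powr (- real j) * t) \<partial>lborel) = (-1)^m * (\<integral>t. poly p t * \<psi> (2 powr (- real j) * t) \<partial>lborel)"
      by (simp add: mult.assoc)
    then show ?thesis using z by simp
  qed
  finally show ?thesis unfolding N_def by simp
qed

end


lemma ind_shift_eq:
  "indicator {-pi..pi} (x - 2*pi) = (indicator {pi..3*pi} x :: real)"
  by (auto simp: indicator_def)

lemma set_int_translate:
  fixes F :: "real \<Rightarrow> complex"
  assumes per: "\<And>x. F (x + 2*pi) = F x"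
  shows "(LINT x:{a+2*pi<..b+2*pi}|lborel. F x) = (LINT x:{a<..b}|lborel. F x)"
proof -
  have "(LINT x:{a+2*pi<..b+2*pi}|lborel. F x) = (\<integral>x. indicator {a+2*pi<..b+2*pi} x *\<^sub>R F x \<partial>lborel)"
    by (simp add: set_lebesgue_integral_def)
  also have "\<dots> = (\<integral>x. indicator {a+2*pi<..b+2*pi} (2*pi + 1 * x) *\<^sub>R F (2*pi + 1 * x) \<partial>lborel)"
    using lborel_integral_real_affine[of 1 "\<lambda>x. indicator {a+2*pi<..b+2*pi} x *\<^sub>R F x" "2*pi"] by simp
  also have "\<dots> = (\<integral>x. indicator {a<..b} x *\<^sub>R F x \<partial>lborel)"
  proof (rule Bochner_Integration.integral_cong[OF refl])
    fix x
    have "indicator {a+2*pi<..b+2*pi} (2*pi + 1 * x) = (indicator {a<..b} x :: real)"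
      by (auto simp: indicator_def)
    moreover have "F (2*pi + 1 * x) = F x" using per[of x] by (simp add: add.commute)
    ultimately show "indicator {a+2*pi<..b+2*pi} (2*pi + 1 * x) *\<^sub>R F (2*pi + 1 * x) = indicator {a<..b} x *\<^sub>R F x"
      by simp
  qed
  also have "\<dots> = (LINT x:{a<..b}|lborel. F x)" by (simp add: set_lebesgue_integral_def)
  finally show ?thesis .
qed

lemma big_integrable:
  fixes F :: "real \<Rightarrow> complex"
  assumes per: "\<And>x. F (x + 2*pi) = F x" and int: "set_integrable lborel {-pi..pi} F"
  shows "set_integrable lborel {-pi..3*pi} F"
proof -
  have "integrable lborel (\<lambda>x. indicator {-pi..pi} (-(2*pi) + 1 * x) *\<^sub>R F (-(2*pi) + 1 * x))"
    using lborel_integrable_real_affine[of "\<lambda>x. indicator {-pi..pi} x *\<^sub>R F x" 1 "-(2*pi)"] int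
    unfolding set_integrable_def by simp
  moreover have "(\<lambda>x. indicator {-pi..pi} (-(2*pi) + 1 * x) *\<^sub>R F (-(2*pi) + 1 * x)) = (\<lambda>x. indicator {pi..3*pi} x *\<^sub>R F x)"
  proof
    fix x
    have "F (-(2*pi) + 1 * x) = F x" using per[of "x - 2*pi"] by simp
    then show "indicator {-pi..pi} (-(2*pi) + 1 * x) *\<^sub>R F (-(2*pi) + 1 * x) = indicator {pi..3*pi} x *\<^sub>R F x"
      using ind_shift_eq[of x] by simp
  qed
  ultimately have "set_integrable lborel {pi..3*pi} F" unfolding set_integrable_def by simp
  then have "set_integrable lborel ({-pi..pi} \<union> {pi..3*pi}) F"
    using int by (intro set_integrable_Un) auto
  moreover have "{-pi..pi} \<union> {pi..3*pi} = {-pi..3*pi}" using pi_gt_zero by auto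
  ultimately show ?thesis by simp
qed

lemma set_int_sub:
  fixes F :: "real \<Rightarrow> complex"
  assumes "set_integrable lborel {-pi..3*pi} F" "-pi \<le> a" "b \<le> 3*pi"
  shows "set_integrable lborel {a<..b} F"
  by (rule set_integrable_subset[OF assms(1)]) (use assms in auto)

lemma set_int_split:
  fixes F :: "real \<Rightarrow> complex"
  assumes "set_integrable lborel {-pi..3*pi} F" "-pi \<le> a" "a \<le> b" "b \<le> c" "c \<le> 3*pi"
  shows "(LINT x:{a<..c}|lborel. F x) = (LINT x:{a<..b}|lborel. F x) + (LINT x:{b<..c}|lborel. F x)"
proof -
  have "{a<..c} = {a<..b} \<union> {b<..c}" using assms by auto
  moreover have "(LINT x:{a<..b} \<union> {b<..c}|lborel. F x) = (LINT x:{a<..b}|lborel. F x) + (LINT x:{b<..c}|lborel. F x)"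
    by (rule set_integral_Un) (use assms in \<open>auto intro: set_int_sub\<close>)
  ultimately show ?thesis by simp
qed

lemma piece:
  fixes F :: "real \<Rightarrow> complex" and J l :: nat
  assumes J: "0 < J"
  defines "A \<equiv> {(2*real l - 1)*pi/real J <.. (2*real l + 1)*pi/real J}"
  assumes Ai: "set_integrable lborel A F"
  shows "set_integrable lborel {-pi<..pi} (\<lambda>w. F ((w + 2*real l*pi)/real J))"
    and "(LINT w:{-pi<..pi}|lborel. F ((w + 2*real l*pi)/real J)) = real J *\<^sub>R (LINT x:A|lborel. F x)"
proof -
  define t where "t = 2*real l*pi/real J"
  define c where "c = 1/real J"
  have c0: "c \<noteq> 0" using J by (simp add: c_def)
  have ind: "indicator A (t + c * w) = (indicator {-pi<..pi} w :: real)" for w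
  proof -
    have h: "0 < pi * real J + w * real J \<longleftrightarrow> -pi < w"
    proof -
      have "pi * real J + w * real J = (pi + w) * real J" by (simp add: algebra_simps)
      then show ?thesis using J by (auto simp: zero_less_mult_iff)
    qed
    have "(t + c * w \<in> A) \<longleftrightarrow> (w \<in> {-pi<..pi})"
      using J h unfolding A_def t_def c_def by (auto simp: field_simps)
    then show ?thesis by (simp add: indicator_def)
  qed
  have arg: "t + c * w = (w + 2*real l*pi)/real J" for w
    unfolding t_def c_def by (simp add: add_divide_distrib)
  have eqf: "(\<lambda>w. indicator A (t + c * w) *\<^sub>R F (t + c * w)) = (\<lambda>w. indicator {-pi<..pi} w *\<^sub>R F ((w + 2*real l*pi)/real J))"
    using ind arg by simp
  show "set_integrable lborel {-pi<..pi} (\<lambda>w. F ((w + 2*real l*pi)/real J))"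
    using lborel_integrable_real_affine[of "\<lambda>x. indicator A x *\<^sub>R F x" c t] Ai c0
    unfolding set_integrable_def eqf by simp
  have "(LINT x:A|lborel. F x) = \<bar>c\<bar> *\<^sub>R (\<integral>w. indicator A (t + c * w) *\<^sub>R F (t + c * w) \<partial>lborel)"
    unfolding set_lebesgue_integral_def by (rule lborel_integral_real_affine[OF c0])
  also have "\<dots> = c *\<^sub>R (LINT w:{-pi<..pi}|lborel. F ((w + 2*real l*pi)/real J))"
    unfolding eqf set_lebesgue_integral_def using J by (simp add: c_def)
  finally show "(LINT w:{-pi<..pi}|lborel. F ((w + 2*real l*pi)/real J)) = real J *\<^sub>R (LINT x:A|lborel. F x)"
    using J by (simp add: c_def)
qed


lemma periodize:
  fixes F :: "real \<Rightarrow> complex" and J :: nat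
  assumes per: "\<And>x. F (x + 2*pi) = F x" and int: "set_integrable lborel {-pi..pi} F" and J: "0 < J"
  shows "(CLBINT w=-pi..pi. (\<Sum>l<J. F ((w + 2*real l*pi)/real J) / real J)) = (CLBINT w=-pi..pi. F w)"
proof -
  have big: "set_integrable lborel {-pi..3*pi} F" by (rule big_integrable[OF per int])
  define e where "e k = (2*real k - 1)*pi/real J" for k :: nat
  have Jr: "1 \<le> real J" using J by simp
  have e_mono: "k \<le> k' \<Longrightarrow> e k \<le> e k'" for k k'
    unfolding e_def using J by (intro divide_right_mono mult_right_mono) auto
  have e0: "e 0 = - pi / real J" unfolding e_def by simp
  have q1: "pi / real J \<le> pi" using Jr pi_gt_zero by (simp add: divide_le_eq)
  have q2: "0 \<le> pi / real J" by simp
  have e0b: "-pi \<le> e 0" "e 0 \<le> pi" unfolding e0 using q1 q2 pi_gt_zero by linarith+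
  have eJ: "e J = 2*pi - pi / real J" unfolding e_def using J by (simp add: field_simps)
  have eJb: "e J \<le> 2*pi" "pi \<le> e J" unfolding eJ using q1 q2 by auto
  have eS: "e (Suc l) = (2*real l + 1)*pi/real J" for l unfolding e_def by simp
  have Ael: "l < J \<Longrightarrow> set_integrable lborel {e l<..e (Suc l)} F" for l
    using e_mono[of 0 l] e_mono[of "Suc l" J] e0b eJb by (intro set_int_sub[OF big]) auto
  have S3: "n \<le> J \<Longrightarrow> (\<Sum>l<n. (LINT x:{e l<..e (Suc l)}|lborel. F x)) = (LINT x:{e 0<..e n}|lborel. F x)" for n
  proof (induction n)
    case 0 then show ?case by (simp add: set_lebesgue_integral_def)
  next
    case (Suc n)
    have "(LINT x:{e 0<..e (Suc n)}|lborel. F x) = (LINT x:{e 0<..e n}|lborel. F x) + (LINT x:{e n<..e (Suc n)}|lborel. F x)"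
      using e_mono[of 0 n] e_mono[of n "Suc n"] e_mono[of "Suc n" J] e0b eJb Suc.prems
      by (intro set_int_split[OF big]) auto
    then show ?case using Suc by simp
  qed
  have S4: "(LINT x:{e 0<..e J}|lborel. F x) = (LINT x:{-pi<..pi}|lborel. F x)"
  proof -
    have "(LINT x:{e 0<..e J}|lborel. F x) = (LINT x:{e 0<..pi}|lborel. F x) + (LINT x:{pi<..e J}|lborel. F x)"
      using e0b eJb by (intro set_int_split[OF big]) auto
    also have "(LINT x:{pi<..e J}|lborel. F x) = (LINT x:{-pi + 2*pi<..e 0 + 2*pi}|lborel. F x)"
      using e0 eJ by simp
    also have "\<dots> = (LINT x:{-pi<..e 0}|lborel. F x)" by (rule set_int_translate[where F=F, OF per])
    also have "(LINT x:{e 0<..pi}|lborel. F x) + (LINT x:{-pi<..e 0}|lborel. F x) = (LINT x:{-pi<..pi}|lborel. F x)"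
      using set_int_split[OF big, of "-pi" "e 0" pi] e0b by simp
    finally show ?thesis .
  qed
  have pcs: "set_integrable lborel {-pi<..pi} (\<lambda>w. F ((w + 2*real l*pi)/real J))"
    and pcv: "(LINT w:{-pi<..pi}|lborel. F ((w + 2*real l*pi)/real J)) = real J *\<^sub>R (LINT x:{e l<..e (Suc l)}|lborel. F x)"
    if "l < J" for l
    using piece[OF J, of l F] Ael[OF that] unfolding eS unfolding e_def by auto
  have "(CLBINT w=-pi..pi. (\<Sum>l<J. F ((w + 2*real l*pi)/real J) / real J))
      = (LINT w:{-pi<..pi}|lborel. (\<Sum>l<J. F ((w + 2*real l*pi)/real J) / real J))"
    by (rule interval_integral_Ioc) simp
  also have "\<dots> = (\<Sum>l<J. (LINT w:{-pi<..pi}|lborel. F ((w + 2*real l*pi)/real J)) / real J)"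
  proof -
    have "(LINT w:{-pi<..pi}|lborel. (\<Sum>l<J. F ((w + 2*real l*pi)/real J) / real J))
        = (\<integral>w. (\<Sum>l<J. indicator {-pi<..pi} w *\<^sub>R F ((w + 2*real l*pi)/real J) / real J) \<partial>lborel)"
      unfolding set_lebesgue_integral_def
      by (intro Bochner_Integration.integral_cong refl) (simp add: indicator_def)
    also have "\<dots> = (\<Sum>l<J. (\<integral>w. indicator {-pi<..pi} w *\<^sub>R F ((w + 2*real l*pi)/real J) \<partial>lborel) / real J)"
      using pcs unfolding set_integrable_def by (simp add: integral_sum)
    finally show ?thesis unfolding set_lebesgue_integral_def .
  qed
  also have "\<dots> = (\<Sum>l<J. (LINT x:{e l<..e (Suc l)}|lborel. F x))"
    using pcv J by (intro sum.cong) (auto simp: scaleR_conv_of_real)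
  also have "\<dots> = (LINT x:{-pi<..pi}|lborel. F x)" using S3[of J] S4 by simp
  also have "\<dots> = (CLBINT w=-pi..pi. F w)"
    by (rule interval_integral_Ioc[symmetric]) simp
  finally show ?thesis .
qed



lemma alg4:
  fixes e1 e2 c1 c2 c3 F H Hc N :: complex
  assumes "c1 * c2 * c3 = 1 / N"
  shows "e1 * (c1 * e2 * F * c2 * H * c3 * Hc) = e1 * e2 * H * Hc * F / N"
proof -
  have "e1 * (c1 * e2 * F * c2 * H * c3 * Hc) = e1 * e2 * H * Hc * F * (c1 * c2 * c3)" by (simp add: mult_ac)
  then show ?thesis using assms by simp
qed

lemma D_id:
  fixes w :: real and k k' :: int and i j u :: nat
  assumes uj: "u \<le> j"
  shows "exp (\<i> * of_int (k - k') * complex_of_real w) * D_ju \<phi> \<psi> f j u i w =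
    (\<Sum>l<2^j. (\<lambda>x. exp (\<i> * of_int (2^j*k - 2^(j-u) * (2^u*k' + int i)) * complex_of_real x) *
        filt_H \<phi> \<psi> j x * cnj (filt_H \<phi> \<psi> (j-u) x) * complex_of_real (f x)) ((w + 2*real l*pi)/real (2^j)) / real (2^j))"
  unfolding D_ju_def Let_def sum_distrib_left
proof (rule sum.cong[OF refl])
  fix l assume "l \<in> {..<(2::nat)^j}"
  let ?\<zeta> = "w + 2 * real l * pi"
  let ?\<xi> = "2 powr (- real j) * ?\<zeta>"
  have xi: "(w + 2*real l*pi)/real (2^j) = ?\<xi>"
    unfolding powr_neg_j by (simp add: field_simps)
  have p2: "(2::real)^(j-u) * 2 powr (- real j) = 2 powr (- real u)"
  proof -
    have "(2::real)^(j-u) = 2 powr (real j - real u)" using uj by (simp add: powr_realpow[symmetric] of_nat_diff)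
    then show ?thesis by (simp add: powr_add[symmetric])
  qed
  have p1: "(2::real)^j * 2 powr (- real j) = 1" unfolding powr_neg_j by simp
  have pj: "(2::int)^(j-u) * 2^u = 2^j" using uj by (simp add: power_add[symmetric])
  have re: "real_of_int (2^j*k - 2^(j-u) * (2^u*k' + int i)) * ?\<xi>
      = real_of_int (k - k') * w - real i * (2 powr (- real u) * ?\<zeta>) + real_of_int ((k - k') * int l) * (pi * 2)"
  proof -
    have r3: "(2::real)^(j-u) * 2^u = 2^j" using arg_cong[OF pj, of real_of_int] by simp
    have "real_of_int (2^j*k - 2^(j-u) * (2^u*k' + int i)) = 2^j * real_of_int k - ((2::real)^(j-u) * 2^u) * real_of_int k' - 2^(j-u) * real i"
      by (simp add: algebra_simps)
    also have "\<dots> = 2^j * real_of_int k - 2^j * real_of_int k' - 2^(j-u) * real i" unfolding r3 ..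
    finally have e1: "real_of_int (2^j*k - 2^(j-u) * (2^u*k' + int i)) = 2^j * real_of_int k - 2^j * real_of_int k' - 2^(j-u) * real i" .
    have "(2^j * real_of_int k - 2^j * real_of_int k' - 2^(j-u) * real i) * ?\<xi>
        = real_of_int k * ((2::real)^j * 2 powr (- real j)) * ?\<zeta> - real_of_int k' * ((2::real)^j * 2 powr (- real j)) * ?\<zeta> - real i * ((2::real)^(j-u) * 2 powr (- real j)) * ?\<zeta>"
      by (simp add: algebra_simps)
    also have "\<dots> = real_of_int k * ?\<zeta> - real_of_int k' * ?\<zeta> - real i * 2 powr (- real u) * ?\<zeta>"
      unfolding p1 p2 by simp
    finally show ?thesis unfolding e1 by (simp add: algebra_simps)
  qed
  have ex: "exp (\<i> * of_int (2^j*k - 2^(j-u) * (2^u*k' + int i)) * complex_of_real ?\<xi>)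
      = exp (\<i> * of_int (k - k') * complex_of_real w) * exp (- \<i> * of_nat i * complex_of_real (2 powr (- real u) * ?\<zeta>))"
  proof -
    have "\<i> * of_int (2^j*k - 2^(j-u) * (2^u*k' + int i)) * complex_of_real ?\<xi>
        = \<i> * complex_of_real (real_of_int (2^j*k - 2^(j-u) * (2^u*k' + int i)) * ?\<xi>)" by simp
    also have "\<dots> = (\<i> * of_int (k - k') * complex_of_real w + (- \<i> * of_nat i * complex_of_real (2 powr (- real u) * ?\<zeta>)))
        + \<i> * (of_int ((k - k') * int l) * (of_real pi * 2))"
      unfolding re by (simp add: algebra_simps)
    finally have eq: "\<i> * of_int (2^j*k - 2^(j-u) * (2^u*k' + int i)) * complex_of_real ?\<xi>
      = (\<i> * of_int (k - k') * complex_of_real w + (- \<i> * of_nat i * complex_of_real (2 powr (- real u) * ?\<zeta>)))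
        + \<i> * (of_int ((k - k') * int l) * (of_real pi * 2))" .
    show ?thesis by (simp only: eq exp_add exp_2pi_1_int mult_1_right)
  qed
  have cst: "2 powr (- real u / 2) * 2 powr (- real j / 2) * 2 powr (- (real j - real u) / 2) = (1::real) / 2^j"
  proof -
    have "2 powr (- real u / 2) * 2 powr (- real j / 2) * 2 powr (- (real j - real u) / 2) = (2::real) powr (- real j)"
      by (simp add: powr_add[symmetric] field_simps)
    then show ?thesis unfolding powr_neg_j by (simp add: field_simps)
  qed
  have cstc: "complex_of_real (2 powr (- real u / 2)) * complex_of_real (2 powr (- real j / 2)) * complex_of_real (2 powr (- (real j - real u) / 2)) = 1 / complex_of_real (real (2^j))"
    using arg_cong[OF cst, of complex_of_real] by simp
  show "exp (\<i> * of_int (k - k') * complex_of_real w) *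
      (complex_of_real (2 powr (- real u / 2)) *
       exp (- \<i> * of_nat i * complex_of_real (2 powr - real u * ?\<zeta>)) *
       complex_of_real (f ?\<xi>) *
       complex_of_real (2 powr (- real j / 2)) *
       filt_H \<phi> \<psi> j ?\<xi> *
       complex_of_real (2 powr (- (real j - real u) / 2)) *
       cnj (filt_H \<phi> \<psi> (j - u) ?\<xi>)) =
      (\<lambda>x. exp (\<i> * of_int (2^j*k - 2^(j-u) * (2^u*k' + int i)) * complex_of_real x) *
        filt_H \<phi> \<psi> j x * cnj (filt_H \<phi> \<psi> (j-u) x) * complex_of_real (f x)) ((w + 2*real l*pi)/real (2^j)) / real (2^j)"
    unfolding xi ex by (rule alg4[OF cstc])
qed



lemma set_int_sum:
  fixes f :: "'i \<Rightarrow> real \<Rightarrow> complex"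
  assumes "finite A" "\<And>a. a \<in> A \<Longrightarrow> set_integrable lborel S (f a)"
  shows "set_integrable lborel S (\<lambda>x. \<Sum>a\<in>A. f a x)"
    and "(LINT x:S|lborel. (\<Sum>a\<in>A. f a x)) = (\<Sum>a\<in>A. LINT x:S|lborel. f a x)"
proof -
  have eq: "(\<lambda>x. indicator S x *\<^sub>R (\<Sum>a\<in>A. f a x)) = (\<lambda>x. \<Sum>a\<in>A. indicator S x *\<^sub>R f a x)"
    by (rule ext) (rule scaleR_sum_right)
  show "set_integrable lborel S (\<lambda>x. \<Sum>a\<in>A. f a x)"
    using assms unfolding set_integrable_def eq by (intro Bochner_Integration.integrable_sum) auto
  show "(LINT x:S|lborel. (\<Sum>a\<in>A. f a x)) = (\<Sum>a\<in>A. LINT x:S|lborel. f a x)"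
    using assms unfolding set_integrable_def set_lebesgue_integral_def eq by (intro Bochner_Integration.integral_sum) auto
qed

lemma exp_g_int:
  fixes g :: "real \<Rightarrow> real"
  assumes gi: "set_integrable lborel {-pi..pi} g"
  shows "set_integrable lborel {-pi..pi} (\<lambda>w. exp (\<i> * of_int m * complex_of_real w) * complex_of_real (g w))"
proof (rule set_integrable_bound[where f="\<lambda>w. complex_of_real (g w)"])
  show "set_integrable lborel {-pi..pi} (\<lambda>w. complex_of_real (g w))"
    using gi unfolding set_integrable_def by (simp add: complex_of_real_integrable_eq[symmetric] scaleR_conv_of_real)
  have gm[measurable]: "(\<lambda>x. indicator {-pi..pi} x *\<^sub>R g x) \<in> borel_measurable lborel"
    using gi unfolding set_integrable_def by (rule borel_measurable_integrable)
  have "(\<lambda>x. exp (\<i> * of_int m * complex_of_real x) * complex_of_real (indicator {-pi..pi} x *\<^sub>R g x)) \<in> borel_measurable lborel"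
    by measurable
  then show "set_borel_measurable lborel {-pi..pi} (\<lambda>w. exp (\<i> * of_int m * complex_of_real w) * complex_of_real (g w))"
    unfolding set_borel_measurable_def by (simp add: scaleR_conv_of_real mult_ac)
  show "AE x in lborel. x \<in> {-pi..pi} \<longrightarrow> norm (exp (\<i> * of_int m * complex_of_real x) * complex_of_real (g x)) \<le> norm (complex_of_real (g x))"
    by (simp add: norm_mult)
qed

lemma alg_id:
  fixes d d' :: "int \<Rightarrow> real" and w gv fv :: real and n n' :: int and z H H' :: complex
  assumes fin: "finite A" "finite B"
    and gv: "complex_of_real gv = z^K * cnj (z^K) * complex_of_real fv"
    and H: "H = z^K * (\<Sum>a\<in>A. complex_of_real (d a) * exp (- \<i> * complex_of_real w * of_int a))"
    and H': "H' = z^K * (\<Sum>b\<in>B. complex_of_real (d' b) * exp (- \<i> * complex_of_real w * of_int b))"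
  shows "(\<Sum>a\<in>A. \<Sum>b\<in>B. complex_of_real (d a * d' b) * (exp (\<i> * of_int ((n - a) - (n' - b)) * complex_of_real w) * complex_of_real gv))
       = exp (\<i> * of_int (n - n') * complex_of_real w) * H * cnj H' * complex_of_real fv"
proof -
  define E where "E a = exp (- \<i> * complex_of_real w * of_int a)" for a :: int
  have e1: "exp (\<i> * of_int ((n - a) - (n' - b)) * complex_of_real w) = exp (\<i> * of_int (n - n') * complex_of_real w) * E a * cnj (E b)" for a b
  proof -
    have "cnj (E b) = exp (\<i> * complex_of_real w * of_int b)" unfolding E_def exp_cnj by simp
    then show ?thesis unfolding E_def by (simp add: exp_add[symmetric] algebra_simps)
  qed
  have "(\<Sum>a\<in>A. \<Sum>b\<in>B. complex_of_real (d a * d' b) * (exp (\<i> * of_int ((n - a) - (n' - b)) * complex_of_real w) * complex_of_real gv))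
      = (\<Sum>a\<in>A. \<Sum>b\<in>B. (exp (\<i> * of_int (n - n') * complex_of_real w) * complex_of_real gv) * ((complex_of_real (d a) * E a) * cnj (complex_of_real (d' b) * E b)))"
    unfolding e1 by (intro sum.cong refl) (simp add: mult_ac)
  also have "\<dots> = (exp (\<i> * of_int (n - n') * complex_of_real w) * complex_of_real gv) * (\<Sum>a\<in>A. \<Sum>b\<in>B. (complex_of_real (d a) * E a) * cnj (complex_of_real (d' b) * E b))"
    by (simp only: sum_distrib_left)
  also have "\<dots> = (exp (\<i> * of_int (n - n') * complex_of_real w) * complex_of_real gv) * ((\<Sum>a\<in>A. complex_of_real (d a) * E a) * cnj (\<Sum>b\<in>B. complex_of_real (d' b) * E b))"
    by (simp only: cnj_sum sum_product)
  also have "\<dots> = exp (\<i> * of_int (n - n') * complex_of_real w) * H * cnj H' * complex_of_real fv"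
    unfolding gv H H' E_def by (simp add: mult_ac)
  finally show ?thesis .
qed



lemma exp_per: "exp (\<i> * of_int m * complex_of_real (x + 2*pi)) = exp (\<i> * of_int m * complex_of_real x)"
proof -
  have "\<i> * of_int m * complex_of_real (x + 2*pi) = \<i> * of_int m * complex_of_real x + \<i> * (of_int m * (of_real pi * 2))"
    by (simp add: algebra_simps)
  then show ?thesis by (simp only: exp_add exp_2pi_1_int mult_1_right)
qed

lemma exp_per2: "exp (- \<i> * complex_of_real (x + 2*pi) * of_int l) = exp (- \<i> * complex_of_real x * of_int l)"
proof -
  have e: "- \<i> * complex_of_real y * of_int l = \<i> * of_int (-l) * complex_of_real y" for y by simp
  show ?thesis unfolding e by (rule exp_per)
qed

theorem corollary1:
  fixes P :: "'a measure" and X :: "int \<Rightarrow> 'a \<Rightarrow> real" and f \<phi> \<psi> :: "real \<Rightarrow> real"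
    and K M :: nat and \<alpha> :: real
  assumes P: "prob_space P"
    and X: "integrated_process_gsd P X K f"
    and f_periodic: "\<forall>w. f (w + 2 * pi) = f w"
    and M: "M \<ge> 1" "M \<ge> K" and alpha: "\<alpha> > 1"
    and W1_supp: "\<exists>a. \<forall>t. \<bar>t\<bar> > a \<longrightarrow> \<phi> t = 0 \<and> \<psi> t = 0"
    and W1_int: "integrable lborel \<phi>" "integrable lborel \<psi>"
    and W1_L2: "integrable lborel (\<lambda>t. (\<phi> t)\<^sup>2)" "integrable lborel (\<lambda>t. (\<psi> t)\<^sup>2)"
    and W1_norm: "fourier \<phi> 0 = 1" "(\<integral>t. (\<psi> t)\<^sup>2 \<partial>lborel) = 1"
    and W2: "\<exists>C. \<forall>\<xi>. cmod (fourier \<psi> \<xi>) * (1 + \<bar>\<xi>\<bar>) powr \<alpha> \<le> C"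
    and W3: "\<forall>m<M. (\<integral>t. t ^ m * \<psi> t \<partial>lborel) = 0"
    and W4: "\<forall>m<M. \<exists>p :: real poly. degree p = m \<and>
               (\<forall>t. (\<Sum>\<^sub>\<infinity>k::int. real_of_int k ^ m * \<phi> (t - real_of_int k)) = poly p t)"
  shows "\<forall>j u k k' i. u \<le> j \<longrightarrow> i < 2 ^ u \<longrightarrow>
           complex_of_real (covar P (wav_coef X \<phi> \<psi> j k)
                                    (wav_coef X \<phi> \<psi> (j - u) (2 ^ u * k' + int i))) =
           (CLBINT w=-pi..pi. exp (\<i> * of_int (k - k') * complex_of_real w) * D_ju \<phi> \<psi> f j u i w)"
proof (intro allI impI)
  fix j u :: nat and k k' :: int and i :: nat
  assume uj: "u \<le> j" and iu: "i < 2 ^ u"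
  obtain a1 where a1: "\<forall>t. \<bar>t\<bar> > a1 \<longrightarrow> \<phi> t = 0 \<and> \<psi> t = 0" using W1_supp by blast
  define a where "a = max a1 0"
  interpret wv \<phi> \<psi> a
  proof
    show "0 \<le> a" by (simp add: a_def)
    show "\<And>t. a < \<bar>t\<bar> \<Longrightarrow> \<phi> t = 0 \<and> \<psi> t = 0" using a1 by (auto simp: a_def)
    show "\<phi> \<in> borel_measurable borel" using borel_measurable_integrable[OF W1_int(1)] by simp
    show "\<psi> \<in> borel_measurable borel" using borel_measurable_integrable[OF W1_int(2)] by simp
    show "integrable lborel (\<lambda>t. (\<phi> t)\<^sup>2)" by (rule W1_L2(1))
    show "integrable lborel (\<lambda>t. (\<psi> t)\<^sup>2)" by (rule W1_L2(2))
    show "integrable lborel \<psi>" by (rule W1_int(2))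
  qed
  define Y where "Y = diff_iter K X"
  define g where "g w = cmod (1 - exp (- \<i> * complex_of_real w)) ^ (2 * K) * f w" for w
  have Ym: "\<And>k. Y k \<in> borel_measurable P" and Y2: "\<And>k. integrable P (\<lambda>\<omega>. (Y k \<omega>)\<^sup>2)"
    and gint: "set_integrable lborel {-pi..pi} g"
    and gcov: "\<And>k l. complex_of_real (covar P (Y (k + l)) (Y l)) =
        (CLBINT w=-pi..pi. exp (\<i> * of_int k * complex_of_real w) * complex_of_real (g w))"
    using X unfolding integrated_process_gsd_def weakly_stationary_spectral_def Y_def g_def by auto
  define j' where "j' = j - u"
  define N where "N = NN j"
  have N0: "0 \<le> N" unfolding N_def by (rule NN_nonneg)
  have NN': "NN j' \<le> N" unfolding N_def j'_def by (rule NN_mono) simp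
  define c where "c = filt_h \<phi> \<psi> j"
  define c' where "c' = filt_h \<phi> \<psi> j'"
  have cs: "fsupp c N" unfolding c_def N_def by (rule h_supp)
  have cs': "fsupp c' N" unfolding c'_def by (rule fsupp_mono[OF h_supp NN'])
  have cm: "\<forall>m<K. (\<Sum>l\<in>{-N..N}. c l * of_int l ^ m) = 0"
    using h_moments[OF W3 W4] M unfolding c_def N_def by auto
  have cm': "\<forall>m<K. (\<Sum>l\<in>{-N..N}. c' l * of_int l ^ m) = 0"
  proof (intro allI impI)
    fix m assume "m < K"
    then have "(\<Sum>l\<in>{-NN j'..NN j'}. c' l * of_int l ^ m) = 0"
      using h_moments[OF W3 W4] M unfolding c'_def by auto
    moreover have "(\<Sum>l\<in>{-N..N}. c' l *\<^sub>R (of_int l ^ m :: real)) = (\<Sum>l\<in>{-NN j'..NN j'}. c' l *\<^sub>R of_int l ^ m)"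
      by (rule fsupp_sum_enlarge[OF _ NN']) (simp add: c'_def h_supp)
    ultimately show "(\<Sum>l\<in>{-N..N}. c' l * of_int l ^ m) = 0" by simp
  qed
  obtain d where d: "fsupp d N" "(dlt^^K) d = c" using moments_factor[OF cs N0 cm] by blast
  obtain d' where d': "fsupp d' N" "(dlt^^K) d' = c'" using moments_factor[OF cs' N0 cm'] by blast
  define n where "n = (2::int)^j * k"
  define n' where "n' = (2::int)^j' * (2^u * k' + int i)"
  have W: "wav_coef X \<phi> \<psi> j k = (\<lambda>\<omega>. \<Sum>l\<in>{-N..N}. d l * Y (n - l) \<omega>)"
  proof
    fix \<omega>
    have "wav_coef X \<phi> \<psi> j k \<omega> = (\<Sum>l\<in>{-N..N}. c l *\<^sub>R X (n - l) \<omega>)"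
      using wav_formula by (simp add: N_def c_def n_def)
    also have "\<dots> = (\<Sum>l\<in>{-(N+int K)..N+int K}. c l *\<^sub>R X (n - l) \<omega>)"
      by (rule fsupp_sum_enlarge[OF cs, symmetric]) simp
    also have "\<dots> = (\<Sum>l\<in>{-(N+int K)..N+int K}. (dlt^^K) d l * X (n - l) \<omega>)"
      using d(2) by simp
    also have "\<dots> = (\<Sum>l\<in>{-N..N}. d l * Y (n - l) \<omega>)"
      using dlt_pow_time[OF d(1) N0] by (simp add: Y_def)
    finally show "wav_coef X \<phi> \<psi> j k \<omega> = (\<Sum>l\<in>{-N..N}. d l * Y (n - l) \<omega>)" .
  qed
  have W': "wav_coef X \<phi> \<psi> (j - u) (2 ^ u * k' + int i) = (\<lambda>\<omega>. \<Sum>l\<in>{-N..N}. d' l * Y (n' - l) \<omega>)"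
  proof
    fix \<omega>
    have "wav_coef X \<phi> \<psi> (j - u) (2 ^ u * k' + int i) \<omega> = (\<Sum>l\<in>{-NN j'..NN j'}. c' l *\<^sub>R X (n' - l) \<omega>)"
      using wav_formula by (simp add: j'_def c'_def n'_def)
    also have "\<dots> = (\<Sum>l\<in>{-(N+int K)..N+int K}. c' l *\<^sub>R X (n' - l) \<omega>)"
      by (rule fsupp_sum_enlarge[OF _ , symmetric]) (use NN' in \<open>simp_all add: c'_def h_supp\<close>)
    also have "\<dots> = (\<Sum>l\<in>{-(N+int K)..N+int K}. (dlt^^K) d' l * X (n' - l) \<omega>)"
      using d'(2) by simp
    also have "\<dots> = (\<Sum>l\<in>{-N..N}. d' l * Y (n' - l) \<omega>)"
      using dlt_pow_time[OF d'(1) N0] by (simp add: Y_def)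
    finally show "wav_coef X \<phi> \<psi> (j - u) (2 ^ u * k' + int i) \<omega> = (\<Sum>l\<in>{-N..N}. d' l * Y (n' - l) \<omega>)" .
  qed
  have cv: "covar P (wav_coef X \<phi> \<psi> j k) (wav_coef X \<phi> \<psi> (j - u) (2 ^ u * k' + int i))
     = (\<Sum>a\<in>{-N..N}. \<Sum>b\<in>{-N..N}. d a * d' b * covar P (Y (n - a)) (Y (n' - b)))"
    unfolding W W' by (rule covar_sum[OF P Ym Y2]) auto
  show "complex_of_real (covar P (wav_coef X \<phi> \<psi> j k) (wav_coef X \<phi> \<psi> (j - u) (2 ^ u * k' + int i))) =
           (CLBINT w=-pi..pi. exp (\<i> * of_int (k - k') * complex_of_real w) * D_ju \<phi> \<psi> f j u i w)"
  proof -
    define z where "z w = 1 - exp (- \<i> * complex_of_real w)" for w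
    have zper: "z (x + 2*pi) = z x" for x
      unfolding z_def using exp_per2[of x 1] by simp
    have HF: "filt_H \<phi> \<psi> j w = z w ^ K * (\<Sum>a\<in>{-N..N}. complex_of_real (d a) * exp (- \<i> * complex_of_real w * of_int a))" for w
    proof -
      have "filt_H \<phi> \<psi> j w = (\<Sum>l\<in>{-(N+int K)..N+int K}. complex_of_real (c l) * exp (- \<i> * complex_of_real w * of_int l))"
        unfolding filt_H_def c_def[symmetric]
        by (rule infsum_int_fin) (use cs in \<open>auto simp: fsupp_def\<close>)
      then show ?thesis using dlt_pow_freq[OF d(1) N0, of K w] d(2) by (simp add: z_def)
    qed
    have HF': "filt_H \<phi> \<psi> (j - u) w = z w ^ K * (\<Sum>a\<in>{-N..N}. complex_of_real (d' a) * exp (- \<i> * complex_of_real w * of_int a))" for w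
    proof -
      have "filt_H \<phi> \<psi> (j - u) w = (\<Sum>l\<in>{-(N+int K)..N+int K}. complex_of_real (c' l) * exp (- \<i> * complex_of_real w * of_int l))"
        unfolding filt_H_def j'_def[symmetric] c'_def[symmetric]
        by (rule infsum_int_fin) (use cs' in \<open>auto simp: fsupp_def\<close>)
      then show ?thesis using dlt_pow_freq[OF d'(1) N0, of K w] d'(2) by (simp add: z_def)
    qed
    have Hper: "filt_H \<phi> \<psi> jj (x + 2*pi) = filt_H \<phi> \<psi> jj x" for jj x
      unfolding filt_H_def using exp_per2[of x] by simp
    have gz: "complex_of_real (g w) = z w ^ K * cnj (z w ^ K) * complex_of_real (f w)" for w
    proof -
      have "complex_of_real (cmod (z w) ^ (2 * K)) = (complex_of_real ((cmod (z w))\<^sup>2)) ^ K"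
        by (simp add: power_mult)
      also have "\<dots> = (z w * cnj (z w)) ^ K" by (simp only: complex_norm_square)
      finally show ?thesis unfolding g_def z_def[symmetric] by (simp add: power_mult_distrib)
    qed
    define F where "F x = exp (\<i> * of_int (n - n') * complex_of_real x) * filt_H \<phi> \<psi> j x * cnj (filt_H \<phi> \<psi> (j-u) x) * complex_of_real (f x)" for x
    define T where "T a b w = complex_of_real (d a * d' b) * (exp (\<i> * of_int ((n - a) - (n' - b)) * complex_of_real w) * complex_of_real (g w))" for a b w
    have pw: "(\<Sum>a\<in>{-N..N}. \<Sum>b\<in>{-N..N}. T a b w) = F w" for w
      unfolding F_def T_def by (rule alg_id[OF _ _ gz HF HF']) auto
    have Ti: "set_integrable lborel {-pi..pi} (T a b)" for a b
      unfolding T_def by (intro set_integrable_mult_right exp_g_int gint)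
    have Ti2: "set_integrable lborel {-pi..pi} (\<lambda>w. \<Sum>b\<in>{-N..N}. T a b w)" for a
      by (rule set_int_sum(1)) (use Ti in auto)
    have Fi: "set_integrable lborel {-pi..pi} F"
    proof -
      have "set_integrable lborel {-pi..pi} (\<lambda>w. \<Sum>a\<in>{-N..N}. \<Sum>b\<in>{-N..N}. T a b w)"
        by (rule set_int_sum(1)) (use Ti2 in auto)
      then show ?thesis unfolding pw .
    qed
    have Fper: "F (x + 2*pi) = F x" for x
      unfolding F_def using exp_per[of "n - n'" x] Hper f_periodic by simp
    have "complex_of_real (covar P (wav_coef X \<phi> \<psi> j k) (wav_coef X \<phi> \<psi> (j - u) (2 ^ u * k' + int i)))
       = (\<Sum>a\<in>{-N..N}. \<Sum>b\<in>{-N..N}. complex_of_real (d a * d' b) * complex_of_real (covar P (Y (n - a)) (Y (n' - b))))"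
      unfolding cv by simp
    also have "\<dots> = (\<Sum>a\<in>{-N..N}. \<Sum>b\<in>{-N..N}. LINT w:{-pi..pi}|lborel. T a b w)"
    proof (intro sum.cong refl)
      fix a b
      have "complex_of_real (covar P (Y (n - a)) (Y (n' - b))) = complex_of_real (covar P (Y (((n - a) - (n' - b)) + (n' - b))) (Y (n' - b)))"
        by simp
      also have "\<dots> = (CLBINT w=-pi..pi. exp (\<i> * of_int ((n - a) - (n' - b)) * complex_of_real w) * complex_of_real (g w))"
        by (rule gcov)
      also have "\<dots> = (LINT w:{-pi..pi}|lborel. exp (\<i> * of_int ((n - a) - (n' - b)) * complex_of_real w) * complex_of_real (g w))"
        by (rule interval_integral_Icc) simp
      finally show "complex_of_real (d a * d' b) * complex_of_real (covar P (Y (n - a)) (Y (n' - b))) = (LINT w:{-pi..pi}|lborel. T a b w)"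
        unfolding T_def by simp
    qed
    also have "\<dots> = (\<Sum>a\<in>{-N..N}. LINT w:{-pi..pi}|lborel. (\<Sum>b\<in>{-N..N}. T a b w))"
      by (intro sum.cong refl set_int_sum(2)[symmetric]) (use Ti in auto)
    also have "\<dots> = (LINT w:{-pi..pi}|lborel. (\<Sum>a\<in>{-N..N}. \<Sum>b\<in>{-N..N}. T a b w))"
      by (intro set_int_sum(2)[symmetric]) (use Ti2 in auto)
    also have "\<dots> = (LINT w:{-pi..pi}|lborel. F w)" unfolding pw ..
    also have "\<dots> = (CLBINT w=-pi..pi. F w)"
      by (rule interval_integral_Icc[symmetric]) simp
    also have "\<dots> = (CLBINT w=-pi..pi. (\<Sum>l<2^j. F ((w + 2*real l*pi)/real (2^j)) / real (2^j)))"
      by (rule periodize[OF Fper Fi, symmetric]) simp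
    also have "\<dots> = (CLBINT w=-pi..pi. exp (\<i> * of_int (k - k') * complex_of_real w) * D_ju \<phi> \<psi> f j u i w)"
    proof -
      have "(\<Sum>l<2^j. F ((w + 2*real l*pi)/real (2^j)) / real (2^j)) = exp (\<i> * of_int (k - k') * complex_of_real w) * D_ju \<phi> \<psi> f j u i w" for w
        unfolding D_id[OF uj] F_def n_def n'_def j'_def ..
      then show ?thesis by simp
    qed
    finally show ?thesis .
  qed
qed


end
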